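(* Let $A$, $Q$, $H\subseteq A^Q$ be non-empty finite sets, $n\ge3$, $\mathcal F$ a clone with carrier $A$ satisfying $\Delta^s_n$, and suppose $H\in\mathrm{Inv}_Q\mathcal F$. Let $P=\{p,q\}\in[Q]^2$ with $P\not\subseteq Q^{(n)}_H$. Then either (1) $H|_P=\{g\in A^P:g(p)\in H(p),\ g(q)\in H(q)\}$, or (2) there is $\sigma\in S_A$ with $H|_P=\{g\in A^P: g(p)\in H(p),\ g(q)\in H(q),\ g(q)=\sigma(g(p))\}$.
   Context: $\mathcal O(A)=\bigcup_{n<\omega}A^{A^n}$; $\mathcal F_{[n]}=\mathcal F\cap A^{A^n}$; $\mathrm{ran}\,\mathbf x$ is the set of entries of $\mathbf x\in A^n$; $A^n_k=\{\mathbf x\in A^n:|\mathrm{ran}\,\mathbf x|=k\}$, $A^n_{<n}=\bigcup_{k<n}A^n_k$. A clone with carrier $A$ is a subset of $\mathcal O(A)$ containing all projections and closed under composition. For $f\in\mathcal O(A)_{[m]}$, $h_i\in A^Q$, $f(h_0,\dots,h_{m-1})$ is $q\mapsto f(h_0(q)\dots h_{m-1}(q))$; $\mathrm{Inv}_Q\mathcal F$ is the set of $H\subseteq A^Q$ closed under such compositions with $f\in\mathcal F$. $H(q)=\{h(q):h\in H\}$, $H|_P=\{h|_P:h\in H\}$, $[Q]^2$ the 2-element subsets of $Q$, $S_A$ the permutations of $A$, $Q^{(n)}_H=\{q\in Q:|H(q)|<n\}$. $\mathcal F$ satisfies $\Delta^s_n$ if there is $i<n$ such that for every $\mathbf a\in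 A^n_n$ and $a\in\mathrm{ran}\,\mathbf a$ there is $s\in\mathcal F_{[n]}$ with $s(\mathbf a)=a$ and $s(\mathbf x)=x_i$ for all $\mathbf x\in A^n_{<n}$. *)

theory Defs
  imports "HOL-Library.FuncSet"
begin

text \<open>An n-ary operation on A is represented as a pair (n, f) with f :: 'a list => 'a,
  defined (with values in A) exactly on lists of length n over A, and undefined elsewhere.\<close>

definition is_op :: "'a set \<Rightarrow> nat \<Rightarrow> ('a list \<Rightarrow> 'a) \<Rightarrow> bool" where
  "is_op A n f \<longleftrightarrow>
     (\<forall>xs. length xs = n \<and> set xs \<subseteq> A \<longrightarrow> f xs \<in> A) \<and>
     (\<forall>xs. \<not> (length xs = n \<and> set xs \<subseteq> A) \<longrightarrow> f xs = undefined)"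

definition ops :: "'a set \<Rightarrow> (nat \<times> ('a list \<Rightarrow> 'a)) set" where
  "ops A = {(n, f). is_op A n f}"

definition restr_op :: "'a set \<Rightarrow> nat \<Rightarrow> ('a list \<Rightarrow> 'a) \<Rightarrow> ('a list \<Rightarrow> 'a)" where
  "restr_op A n f = (\<lambda>xs. if length xs = n \<and> set xs \<subseteq> A then f xs else undefined)"

definition arity_part :: "(nat \<times> ('a list \<Rightarrow> 'a)) set \<Rightarrow> nat \<Rightarrow> ('a list \<Rightarrow> 'a) set" where
  "arity_part F n = {f. (n, f) \<in> F}"

definition clone :: "'a set \<Rightarrow> (nat \<times> ('a list \<Rightarrow> 'a)) set \<Rightarrow> bool" where
  "clone A F \<longleftrightarrow>
     F \<subseteq> ops A \<and>
     (\<forall>n i. i < n \<longrightarrow> (n, restr_op A n (\<lambda>xs. xs ! i)) \<in> F) \<and>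
     (\<forall>m f n g. f \<in> arity_part F m \<and> (\<forall>j<m. g j \<in> arity_part F n) \<longrightarrow>
        (n, restr_op A n (\<lambda>xs. f (map (\<lambda>j. g j xs) [0..<m]))) \<in> F)"

definition Inv :: "'a set \<Rightarrow> 'q set \<Rightarrow> (nat \<times> ('a list \<Rightarrow> 'a)) set \<Rightarrow> ('q \<Rightarrow> 'a) set set" where
  "Inv A Q F = {H. H \<subseteq> (Q \<rightarrow>\<^sub>E A) \<and>
     (\<forall>m f hs. (m, f) \<in> F \<and> (\<forall>j<m. hs j \<in> H) \<longrightarrow>
        (\<lambda>q\<in>Q. f (map (\<lambda>j. hs j q) [0..<m])) \<in> H)}"

text \<open>Delta^s_n: |ran x| = n for x in A^n means x is distinct; |ran x| < n means not distinct.\<close>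
definition Delta_s :: "'a set \<Rightarrow> (nat \<times> ('a list \<Rightarrow> 'a)) set \<Rightarrow> nat \<Rightarrow> bool" where
  "Delta_s A F n \<longleftrightarrow> (\<exists>i<n. \<forall>a. length a = n \<and> set a \<subseteq> A \<and> card (set a) = n \<longrightarrow>
     (\<forall>b\<in>set a. \<exists>s\<in>arity_part F n. s a = b \<and>
        (\<forall>x. length x = n \<and> set x \<subseteq> A \<and> card (set x) < n \<longrightarrow> s x = x ! i)))"

definition proj_at :: "('q \<Rightarrow> 'a) set \<Rightarrow> 'q \<Rightarrow> 'a set" where
  "proj_at H q = (\<lambda>h. h q) ` H"

definition restr_set :: "('q \<Rightarrow> 'a) set \<Rightarrow> 'q set \<Rightarrow> ('q \<Rightarrow> 'a) set" where
  "restr_set H P = (\<lambda>h. restrict h P) ` H"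

definition small_coords :: "'q set \<Rightarrow> ('q \<Rightarrow> 'a) set \<Rightarrow> nat \<Rightarrow> 'q set" where
  "small_coords Q H n = {q\<in>Q. card (proj_at H q) < n}"

end

theory Submission
  imports Defs
begin


definition CLO :: "('a \<times> 'b) set \<Rightarrow> nat \<Rightarrow> nat \<Rightarrow> bool" where
  "CLO R n i \<longleftrightarrow> (\<forall>\<phi> \<psi>. (\<forall>k<n. (\<phi> k, \<psi> k) \<in> R) \<longrightarrow> inj_on \<phi> {..<n} \<longrightarrow>
      \<not> inj_on \<psi> {..<n} \<longrightarrow> (\<forall>j<n. (\<phi> j, \<psi> i) \<in> R))"

lemma ext_inj:
  assumes "finite X" "n \<le> card X" "I \<subseteq> {..<n}" "inj_on \<psi>0 I" "\<psi>0 ` I \<subseteq> X"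
  shows "\<exists>\<phi>. inj_on \<phi> {..<n} \<and> \<phi> ` {..<n} \<subseteq> X \<and> (\<forall>k\<in>I. \<phi> k = \<psi>0 k)"
proof -
  have fI: "finite I" using assms(3) finite_subset by blast
  have c1: "card ({..<n} - I) = n - card I" using assms(3) fI by (simp add: card_Diff_subset)
  have c2: "card (X - \<psi>0 ` I) = card X - card I"
    using assms fI by (simp add: card_Diff_subset card_image)
  have "card ({..<n} - I) \<le> card (X - \<psi>0 ` I)" using c1 c2 assms(2) by linarith
  then obtain g where g: "g ` ({..<n} - I) \<subseteq> X - \<psi>0 ` I" "inj_on g ({..<n} - I)"
    using card_le_inj[of "{..<n} - I" "X - \<psi>0 ` I"] assms(1) by auto
  define \<phi> where "\<phi> k = (if k \<in> I then \<psi>0 k else g k)" for k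
  have "inj_on \<phi> {..<n}"
    unfolding inj_on_def \<phi>_def using g assms(4) unfolding inj_on_def by (auto; blast)
  moreover have "\<phi> ` {..<n} \<subseteq> X" using g assms(5) unfolding \<phi>_def by auto
  moreover have "\<forall>k\<in>I. \<phi> k = \<psi>0 k" by (simp add: \<phi>_def)
  ultimately show ?thesis by blast
qed

lemma three_idx:
  assumes "i < n" "3 \<le> (n::nat)"
  obtains j1 j2 where "j1 < n" "j2 < n" "j1 \<noteq> i" "j2 \<noteq> i" "j1 \<noteq> j2"
proof (cases "i = 0")
  case True then show ?thesis using that[of 1 2] assms by auto
next
  case False
  show ?thesis
  proof (cases "i = 1")
    case True then show ?thesis using that[of 0 2] assms by auto
  next
    case False then show ?thesis using that[of 0 1] assms \<open>i \<noteq> 0\<close> by auto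
  qed
qed

lemma T:
  assumes clo: "CLO R n i" and "i < n" "3 \<le> n" "finite (Domain R)" "n \<le> card (Domain R)"
    and r: "(x0,y0) \<in> R" "(x1,y1) \<in> R" "(x2,y2) \<in> R"
    and d: "x0 \<noteq> x1" "x1 \<noteq> x2" "x0 \<noteq> x2"
    and y: "y0 = y1 \<or> y1 = y2 \<or> y0 = y2"
  shows "(x1,y0) \<in> R \<and> (x2,y0) \<in> R"
proof -
  obtain j1 j2 where j: "j1 < n" "j2 < n" "j1 \<noteq> i" "j2 \<noteq> i" "j1 \<noteq> j2"
    using three_idx assms(2,3) by blast
  define \<psi>0 where "\<psi>0 k = (if k = i then x0 else if k = j1 then x1 else x2)" for k
  have inj0: "inj_on \<psi>0 {i,j1,j2}" using d j unfolding \<psi>0_def inj_on_def by auto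
  have img0: "\<psi>0 ` {i,j1,j2} \<subseteq> Domain R" using r unfolding \<psi>0_def by auto
  have I0: "{i,j1,j2} \<subseteq> {..<n}" using j assms(2) by auto
  have "\<exists>\<phi>. inj_on \<phi> {..<n} \<and> \<phi> ` {..<n} \<subseteq> Domain R \<and> (\<forall>k\<in>{i,j1,j2}. \<phi> k = \<psi>0 k)"
    by (rule ext_inj[OF assms(4,5) I0 inj0 img0])
  then obtain \<phi> where \<phi>: "inj_on \<phi> {..<n}" "\<phi> ` {..<n} \<subseteq> Domain R"
      "\<forall>k\<in>{i,j1,j2}. \<phi> k = \<psi>0 k"
    by (elim exE conjE)
  define \<psi> where "\<psi> k = (if k = i then y0 else if k = j1 then y1 else if k = j2 then y2
     else (SOME y. (\<phi> k, y) \<in> R))" for k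
  have pr: "(\<phi> k, \<psi> k) \<in> R" if "k < n" for k
  proof -
    have "\<phi> k \<in> Domain R" using \<phi>(2) that by auto
    then have "\<exists>y. (\<phi> k, y) \<in> R" by auto
    then show ?thesis using \<phi>(3) r j unfolding \<psi>_def \<psi>0_def
      by (auto intro: someI_ex)
  qed
  have v: "\<psi> i = y0" "\<psi> j1 = y1" "\<psi> j2 = y2" using j unfolding \<psi>_def by auto
  have ni: "\<not> inj_on \<psi> {..<n}"
  proof
    assume inj: "inj_on \<psi> {..<n}"
    have m: "i \<in> {..<n}" "j1 \<in> {..<n}" "j2 \<in> {..<n}" using j assms(2) by auto
    from y show False
    proof (elim disjE)
      assume "y0 = y1" then show False using inj_onD[OF inj _ m(1,2)] v j by auto
    next
      assume "y1 = y2" then show False using inj_onD[OF inj _ m(2,3)] v j by auto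
    next
      assume "y0 = y2" then show False using inj_onD[OF inj _ m(1,3)] v j by auto
    qed
  qed
  have "\<forall>j<n. (\<phi> j, \<psi> i) \<in> R" using clo pr \<phi>(1) ni unfolding CLO_def by blast
  then show ?thesis using j \<phi>(3) unfolding \<psi>_def \<psi>0_def by auto
qed



lemma pick3:
  assumes "finite S" "3 \<le> card S"
  shows "\<exists>u\<in>S. u \<noteq> a \<and> u \<noteq> b"
proof (rule ccontr)
  assume "\<not> ?thesis"
  then have "S \<subseteq> {a,b}" by auto
  then have "card S \<le> card {a,b}" by (simp add: card_mono)
  also have "\<dots> \<le> 2" by (simp add: card_insert_le_m1)
  finally show False using assms by simp
qed

lemma Lone:
  assumes clo: "CLO R n i" and "i < n" "3 \<le> n" "finite R" "n \<le> card (Domain R)"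
    and "(a1,b) \<in> R" "(a2,b) \<in> R" "a1 \<noteq> a2"
  shows "R = Domain R \<times> Range R"
proof -
  have fD: "finite (Domain R)" using assms(4) by (simp add: finite_Domain)
  have s1: "(a,b) \<in> R" if aD: "a \<in> Domain R" for a
  proof (cases "a = a1 \<or> a = a2")
    case True then show ?thesis using assms by auto
  next
    case False
    obtain y where "(a,y) \<in> R" using aD by blast
    then show ?thesis using T[OF clo assms(2,3) fD assms(5), of a1 b a2 b a y] assms False by auto
  qed
  have "(a,c) \<in> R" if ac0: "a \<in> Domain R" "c \<in> Range R" for a c
  proof -
    obtain ac where ac: "(ac,c) \<in> R" using ac0 by blast
    show ?thesis
    proof (cases "a = ac")
      case True then show ?thesis using ac by simp
    next
      case False
      obtain u where u: "u \<in> Domain R" "u \<noteq> a" "u \<noteq> ac" using pick3[OF fD, of a ac] assms(3,5) by auto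
      show ?thesis using T[OF clo assms(2,3) fD assms(5), of ac c a b u b] ac s1 u ac0 False by auto
    qed
  qed
  then show ?thesis by auto
qed

lemma M:
  assumes clo: "CLO R n i" and clo': "CLO (R\<inverse>) n i" and "i < n" "3 \<le> n" "finite R"
    "n \<le> card (Domain R)"
  shows "R = Domain R \<times> Range R \<or> ((\<forall>a b b'. (a,b) \<in> R \<longrightarrow> (a,b') \<in> R \<longrightarrow> b = b') \<and>
     (\<forall>a a' b. (a,b) \<in> R \<longrightarrow> (a',b) \<in> R \<longrightarrow> a = a'))"
proof (cases "\<forall>a a' b. (a,b) \<in> R \<longrightarrow> (a',b) \<in> R \<longrightarrow> a = a'")
  case False
  then obtain a a' b where "(a,b) \<in> R" "(a',b) \<in> R" "a \<noteq> a'" by blast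
  then show ?thesis using Lone[OF clo assms(3,4,5,6)] by blast
next
  case inj: True
  show ?thesis
  proof (cases "\<forall>a b b'. (a,b) \<in> R \<longrightarrow> (a,b') \<in> R \<longrightarrow> b = b'")
    case True then show ?thesis using inj by blast
  next
    case False
    then obtain a b b' where ab: "(a,b) \<in> R" "(a,b') \<in> R" "b \<noteq> b'" by blast
    define g where "g y = (SOME x. (x,y) \<in> R)" for y
    have "Domain R \<subseteq> g ` Range R"
    proof
      fix x assume "x \<in> Domain R"
      then obtain y where y: "(x,y) \<in> R" by auto
      then have "(g y, y) \<in> R" unfolding g_def by (rule someI)
      then have "g y = x" using inj y by blast
      then show "x \<in> g ` Range R" using y by force
    qed
    moreover have "finite (Range R)" using assms(5) by (simp add: finite_Range)
    ultimately have "card (Domain R) \<le> card (Range R)"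
      by (meson card_image_le card_mono finite_imageI order_trans)
    then have "n \<le> card (Domain (R\<inverse>))" using assms(6) by simp
    moreover have "(b,a) \<in> R\<inverse>" "(b',a) \<in> R\<inverse>" using ab by auto
    moreover have fin': "finite (R\<inverse>)" using assms(5) by simp
    ultimately have L: "R\<inverse> = Domain (R\<inverse>) \<times> Range (R\<inverse>)"
      using Lone[OF clo' assms(3,4) fin'] ab(3) by blast
    then have "R\<inverse> = Range R \<times> Domain R" by (simp only: Domain_converse Range_converse)
    then have "R = Domain R \<times> Range R" by (metis converse_converse converse_Times)
    then show ?thesis by blast
  qed
qed

lemma extend_bij:
  assumes "finite A" "X \<subseteq> A" "Y \<subseteq> A" "bij_betw f X Y"
  shows "\<exists>\<sigma>. bij_betw \<sigma> A A \<and> (\<forall>x\<in>X. \<sigma> x = f x)"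
proof -
  have fX: "finite X" "finite Y" using assms finite_subset by auto
  have "card (A - X) = card (A - Y)"
    using assms fX by (simp add: card_Diff_subset bij_betw_same_card)
  then obtain g where g: "bij_betw g (A - X) (A - Y)"
    using finite_same_card_bij assms(1) by blast
  define \<sigma> where "\<sigma> x = (if x \<in> X then f x else g x)" for x
  have "bij_betw \<sigma> X Y" using assms(4) by (rule bij_betw_cong[THEN iffD1, rotated]) (simp add: \<sigma>_def)
  moreover have "bij_betw \<sigma> (A - X) (A - Y)" using g
    by (rule bij_betw_cong[THEN iffD1, rotated]) (simp add: \<sigma>_def)
  ultimately have "bij_betw \<sigma> (X \<union> (A - X)) (Y \<union> (A - Y))"
    by (rule bij_betw_combine) auto
  moreover have "X \<union> (A - X) = A" "Y \<union> (A - Y) = A" using assms by auto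
  ultimately show ?thesis unfolding \<sigma>_def by auto
qed



lemma CLO_from_H:
  fixes H :: "('q \<Rightarrow> 'a) set"
  assumes inv: "H \<in> Inv A Q F" and HA: "H \<subseteq> (Q \<rightarrow>\<^sub>E A)" and pQ: "p \<in> Q" "q \<in> Q"
    and i: "i < n"
    and D: "\<forall>a. length a = n \<and> set a \<subseteq> A \<and> card (set a) = n \<longrightarrow>
     (\<forall>b\<in>set a. \<exists>s\<in>arity_part F n. s a = b \<and>
        (\<forall>x. length x = n \<and> set x \<subseteq> A \<and> card (set x) < n \<longrightarrow> s x = x ! i))"
  shows "CLO ((\<lambda>h. (h p, h q)) ` H) n i"
  unfolding CLO_def
proof (intro allI impI)
  fix \<phi> \<psi> j
  let ?R = "(\<lambda>h. (h p, h q)) ` H"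
  assume pr: "\<forall>k<n. (\<phi> k, \<psi> k) \<in> ?R" and inj: "inj_on \<phi> {..<n}"
    and ni: "\<not> inj_on \<psi> {..<n}" and j: "j < n"
  define hs where "hs k = (SOME h. h \<in> H \<and> h p = \<phi> k \<and> h q = \<psi> k)" for k
  have hs: "hs k \<in> H \<and> hs k p = \<phi> k \<and> hs k q = \<psi> k" if "k < n" for k
  proof -
    have "\<exists>h. h \<in> H \<and> h p = \<phi> k \<and> h q = \<psi> k" using pr that by force
    then show ?thesis unfolding hs_def by (rule someI_ex)
  qed
  have inA: "\<phi> k \<in> A" "\<psi> k \<in> A" if "k < n" for k
    using hs[OF that] HA pQ by (metis PiE_mem subsetD)+
  let ?xs = "map \<phi> [0..<n]" and ?ys = "map \<psi> [0..<n]"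
  have dx: "distinct ?xs" using inj by (simp add: distinct_map atLeast0LessThan)
  have ndy: "\<not> distinct ?ys" using ni by (simp add: distinct_map atLeast0LessThan)
  have sx: "set ?xs \<subseteq> A" "set ?ys \<subseteq> A" using inA by auto
  have cx: "card (set ?xs) = n" using dx distinct_card by fastforce
  have cy: "card (set ?ys) < n"
  proof -
    have "card (set ?ys) \<le> length ?ys" by (rule card_length)
    moreover have "card (set ?ys) \<noteq> length ?ys" using ndy card_distinct by blast
    ultimately show ?thesis by simp
  qed
  have "\<phi> j \<in> set ?xs" using j by auto
  moreover have "length ?xs = n \<and> set ?xs \<subseteq> A \<and> card (set ?xs) = n" using sx cx by simp
  ultimately obtain s where s: "s \<in> arity_part F n" "s ?xs = \<phi> j"
     "\<forall>x. length x = n \<and> set x \<subseteq> A \<and> card (set x) < n \<longrightarrow> s x = x ! i"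
    using D by blast
  have sy: "s ?ys = \<psi> i" using s(3) sx cy i by simp
  have hsH: "\<forall>k<n. hs k \<in> H" using hs by blast
  have "(n, s) \<in> F" using s(1) unfolding arity_part_def by simp
  then have gH: "(\<lambda>r\<in>Q. s (map (\<lambda>k. hs k r) [0..<n])) \<in> H"
    using inv hsH unfolding Inv_def by blast
  have m1: "map (\<lambda>k. hs k p) [0..<n] = ?xs" "map (\<lambda>k. hs k q) [0..<n] = ?ys"
    using hs by auto
  have e1: "s (map (\<lambda>k. hs k p) [0..<n]) = \<phi> j" by (simp only: m1 s(2))
  have e2: "s (map (\<lambda>k. hs k q) [0..<n]) = \<psi> i" by (simp only: m1 sy)
  define g where "g = (\<lambda>r\<in>Q. s (map (\<lambda>k. hs k r) [0..<n]))"
  have gH': "g \<in> H" using gH unfolding g_def .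
  have "g p = \<phi> j" "g q = \<psi> i" unfolding g_def using pQ e1 e2 by simp_all
  then show "(\<phi> j, \<psi> i) \<in> ?R" by (intro image_eqI[of _ _ g] gH') simp
qed

theorem lemma5:
  fixes A :: "'a set" and Q :: "'q set" and H :: "('q \<Rightarrow> 'a) set"
    and F :: "(nat \<times> ('a list \<Rightarrow> 'a)) set" and n :: nat and p q :: 'q
  assumes "finite A" "A \<noteq> {}" "finite Q" "Q \<noteq> {}" "finite H" "H \<noteq> {}"
    and "H \<subseteq> (Q \<rightarrow>\<^sub>E A)"
    and "n \<ge> 3" and "clone A F" and "Delta_s A F n"
    and "H \<in> Inv A Q F"
    and "p \<in> Q" "q \<in> Q" "p \<noteq> q"
    and "\<not> {p, q} \<subseteq> small_coords Q H n"
  shows "restr_set H {p, q} =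
           {g \<in> {p, q} \<rightarrow>\<^sub>E A. g p \<in> proj_at H p \<and> g q \<in> proj_at H q}
      \<or> (\<exists>\<sigma>. bij_betw \<sigma> A A \<and> restr_set H {p, q} =
           {g \<in> {p, q} \<rightarrow>\<^sub>E A. g p \<in> proj_at H p \<and> g q \<in> proj_at H q \<and> g q = \<sigma> (g p)})"
proof -
  define R where "R = (\<lambda>h. (h p, h q)) ` H"
  have DR: "Domain R = proj_at H p" unfolding R_def proj_at_def by force
  have RR: "Range R = proj_at H q" unfolding R_def proj_at_def by force
  have fR: "finite R" unfolding R_def using assms(5) by simp
  have XA: "proj_at H p \<subseteq> A" "proj_at H q \<subseteq> A"
  proof -
    have "\<forall>h\<in>H. h p \<in> A \<and> h q \<in> A" using assms(7,12,13) by (metis PiE_mem subsetD)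
    then show "proj_at H p \<subseteq> A" "proj_at H q \<subseteq> A" unfolding proj_at_def by auto
  qed
  obtain i where i: "i < n" and D: "\<forall>a. length a = n \<and> set a \<subseteq> A \<and> card (set a) = n \<longrightarrow>
     (\<forall>b\<in>set a. \<exists>s\<in>arity_part F n. s a = b \<and>
        (\<forall>x. length x = n \<and> set x \<subseteq> A \<and> card (set x) < n \<longrightarrow> s x = x ! i))"
    using assms(10) unfolding Delta_s_def by blast
  have c1: "CLO R n i" unfolding R_def by (rule CLO_from_H[OF assms(11,7,12,13) i D])
  have "CLO ((\<lambda>h. (h q, h p)) ` H) n i" by (rule CLO_from_H[OF assms(11,7,13,12) i D])
  moreover have "(\<lambda>h. (h q, h p)) ` H = R\<inverse>" unfolding R_def by auto
  ultimately have c2: "CLO (R\<inverse>) n i" by simp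
  have eq: "restr_set H {p, q} = {g \<in> {p, q} \<rightarrow>\<^sub>E A. (g p, g q) \<in> R}"
  proof
    show "restr_set H {p, q} \<subseteq> {g \<in> {p, q} \<rightarrow>\<^sub>E A. (g p, g q) \<in> R}"
    proof
      fix g assume "g \<in> restr_set H {p, q}"
      then obtain h where h: "h \<in> H" "g = restrict h {p,q}" unfolding restr_set_def by auto
      then have "h \<in> Q \<rightarrow>\<^sub>E A" using assms(7) by auto
      then show "g \<in> {g \<in> {p, q} \<rightarrow>\<^sub>E A. (g p, g q) \<in> R}"
        using h assms(12,13) unfolding R_def by auto
    qed
  next
    show "{g \<in> {p, q} \<rightarrow>\<^sub>E A. (g p, g q) \<in> R} \<subseteq> restr_set H {p, q}"
    proof
      fix g assume g: "g \<in> {g \<in> {p, q} \<rightarrow>\<^sub>E A. (g p, g q) \<in> R}"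
      then obtain h where h: "h \<in> H" "g p = h p" "g q = h q" unfolding R_def by auto
      have "g = restrict h {p,q}"
      proof
        fix x show "g x = restrict h {p,q} x"
          using g h by (cases "x = p \<or> x = q") (auto simp: PiE_def extensional_def)
      qed
      then show "g \<in> restr_set H {p, q}" using h(1) unfolding restr_set_def by auto
    qed
  qed
  have "n \<le> card (Domain R) \<or> n \<le> card (Range R)"
    using assms(12,13,15) unfolding small_coords_def DR RR by auto
  then have alt: "R = Domain R \<times> Range R \<or> ((\<forall>a b b'. (a,b) \<in> R \<longrightarrow> (a,b') \<in> R \<longrightarrow> b = b') \<and>
     (\<forall>a a' b. (a,b) \<in> R \<longrightarrow> (a',b) \<in> R \<longrightarrow> a = a'))"
  proof
    assume "n \<le> card (Domain R)"
    then show ?thesis using M[OF c1 c2 i _ fR] assms(8) by simp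
  next
    assume "n \<le> card (Range R)"
    then have "n \<le> card (Domain (R\<inverse>))" by simp
    moreover have "CLO ((R\<inverse>)\<inverse>) n i" using c1 by simp
    moreover have "finite (R\<inverse>)" using fR by simp
    ultimately have "R\<inverse> = Domain (R\<inverse>) \<times> Range (R\<inverse>) \<or> ((\<forall>a b b'. (a,b) \<in> R\<inverse> \<longrightarrow> (a,b') \<in> R\<inverse> \<longrightarrow> b = b') \<and>
     (\<forall>a a' b. (a,b) \<in> R\<inverse> \<longrightarrow> (a',b) \<in> R\<inverse> \<longrightarrow> a = a'))"
      using M[OF c2 _ i] assms(8) by blast
    then show ?thesis
    proof
      assume "R\<inverse> = Domain (R\<inverse>) \<times> Range (R\<inverse>)"
      then have "R\<inverse> = Range R \<times> Domain R" by (simp only: Domain_converse Range_converse)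
      then have "R = Domain R \<times> Range R" by (metis converse_converse converse_Times)
      then show ?thesis by blast
    qed auto
  qed
  then show ?thesis
  proof
    assume "R = Domain R \<times> Range R"
    then have "restr_set H {p, q} = {g \<in> {p, q} \<rightarrow>\<^sub>E A. g p \<in> proj_at H p \<and> g q \<in> proj_at H q}"
      unfolding eq DR RR by (metis (no_types, lifting) mem_Sigma_iff)
    then show ?thesis by blast
  next
    assume fi: "(\<forall>a b b'. (a,b) \<in> R \<longrightarrow> (a,b') \<in> R \<longrightarrow> b = b') \<and>
     (\<forall>a a' b. (a,b) \<in> R \<longrightarrow> (a',b) \<in> R \<longrightarrow> a = a')"
    define f where "f a = (SOME b. (a,b) \<in> R)" for a
    have fa: "(a, f a) \<in> R" if "a \<in> Domain R" for a
      using that unfolding f_def by (meson DomainE someI)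
    have fu: "b = f a" if "(a,b) \<in> R" for a b
      using fa[of a] that fi by blast
    have "bij_betw f (Domain R) (Range R)"
      unfolding bij_betw_def
    proof
      show "inj_on f (Domain R)"
        unfolding inj_on_def using fa fi by metis
      show "f ` Domain R = Range R"
        using fa fu by force
    qed
    then obtain \<sigma> where \<sigma>: "bij_betw \<sigma> A A" "\<forall>x\<in>Domain R. \<sigma> x = f x"
      using extend_bij[OF assms(1)] XA unfolding DR RR by blast
    have "restr_set H {p, q} =
           {g \<in> {p, q} \<rightarrow>\<^sub>E A. g p \<in> proj_at H p \<and> g q \<in> proj_at H q \<and> g q = \<sigma> (g p)}"
      unfolding eq
    proof (intro Collect_cong conj_cong refl)
      fix g
      show "((g p, g q) \<in> R) = (g p \<in> proj_at H p \<and> g q \<in> proj_at H q \<and> g q = \<sigma> (g p))"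
        using fa fu \<sigma>(2) unfolding DR[symmetric] RR[symmetric] by (metis Domain.DomainI Range.RangeI)
    qed
    then show ?thesis using \<sigma>(1) by blast
  qed
qed

end
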